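(* For every integer $q\ge1$, $\sigma(q)\le e(q)$.
   Context: Standing setup: $b\ge2$ integer, $\mathcal{A}=\{0,\dots,b-1\}$, $\gamma\in(1/b,1)$, $\psi$ a $\mathbb{Z}$-periodic $C^1$ function. $S(x,\mathbf{i})=\sum_{n\ge1}\gamma^{n-1}\psi\big(\frac{x+i_1+i_2b+\cdots+i_nb^{n-1}}{b^n}\big)$ for $\mathbf{i}\in\mathcal{A}^{\mathbb{Z}^+}$, $S'=\partial_xS$. For $\mathbf{u}\in\mathcal{A}^q$, $x(\mathbf{u})=(x+u_1+u_2b+\cdots+u_qb^{q-1})/b^q$. Sequences $\mathbf{i},\mathbf{j}$ are $(\varepsilon,\delta)$-tangent at $x_0$ if $|S(x_0,\mathbf{i})-S(x_0,\mathbf{j})|\le\varepsilon$ and $|S'(x_0,\mathbf{i})-S'(x_0,\mathbf{j})|\le\delta$. $E(q,x_0;\varepsilon,\delta)$: pairs $(\mathbf{k},\mathbf{l})\in\mathcal{A}^q\times\mathcal{A}^q$ with some $\mathbf{u},\mathbf{v}\in\mathcal{A}^{\mathbb{Z}^+}$ such that the concatenations $\mathbf{ku},\mathbf{lv}$ are $(\varepsilon,\delta)$-tangent at $x_0$. For $J\subset\mathbb{R}$: $E(q,J;\varepsilon,\delta)=\bigcup_{x\in J}E(q,x;\varepsilon,\delta)$, $E(q,J)=\bigcap_{\varepsilon,\delta>0}E(q,J;\varepsilon,\delta)$, $e(q,J)=\max_{\mathbf{k}\in\mathcal{A}^q}\#\{\mathbf{l}:(\mathbf{k},\mathbf{l})\in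 E(q,J)\}$, and $e(q)=\lim_{p\to\infty}\max_{0\le k<b^p}e(q,[k/b^p,(k+1)/b^p])$. Weight function: measurable $\omega:[0,1)\to(0,\infty)$ with $\omega,1/\omega$ bounded. Admissible testing function of order $q$: measurable $V:[0,1)\times\mathcal{A}^q\times\mathcal{A}^q\to[0,\infty)$ such that for some $\varepsilon,\delta>0$, $V(x,\mathbf{u},\mathbf{v})V(x,\mathbf{v},\mathbf{u})\ge1$ whenever $(\mathbf{u},\mathbf{v})\in E(q,x;\varepsilon,\delta)$, $x\in[0,1)$. $\Sigma_{V,\omega}(x)=\sup_{\mathbf{u}}\frac{\omega(x)}{\omega(x(\mathbf{u}))}\sum_{\mathbf{v}}V(x,\mathbf{u},\mathbf{v})$; $\sigma(q)=\inf_{\omega,V}\|\Sigma_{V,\omega}\|_\infty$. *)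

theory Defs
  imports "HOL-Analysis.Analysis" "HOL-Probability.Essential_Supremum"
begin

text \<open>Infinite sequences over the alphabet {0..b-1}, 0-indexed: i 0 = i_1, i 1 = i_2, ...\<close>
definition seqs :: "nat \<Rightarrow> (nat \<Rightarrow> nat) set" where
  "seqs b = {i. \<forall>n. i n < b}"

definition words :: "nat \<Rightarrow> nat \<Rightarrow> nat list set" where
  "words b q = {k. length k = q \<and> (\<forall>a\<in>set k. a < b)}"

definition conc :: "nat list \<Rightarrow> (nat \<Rightarrow> nat) \<Rightarrow> (nat \<Rightarrow> nat)" where
  "conc k u = (\<lambda>n. if n < length k then k ! n else u (n - length k))"

text \<open>S(x,i) = sum_{n>=1} gamma^(n-1) psi((x + i_1 + i_2 b + ... + i_n b^(n-1)) / b^n)\<close>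
definition S :: "nat \<Rightarrow> real \<Rightarrow> (real \<Rightarrow> real) \<Rightarrow> real \<Rightarrow> (nat \<Rightarrow> nat) \<Rightarrow> real" where
  "S b \<gamma> \<psi> x i =
     (\<Sum>n. \<gamma> ^ n * \<psi> ((x + (\<Sum>m<Suc n. real (i m) * real b ^ m)) / real b ^ Suc n))"

definition Sd :: "nat \<Rightarrow> real \<Rightarrow> (real \<Rightarrow> real) \<Rightarrow> real \<Rightarrow> (nat \<Rightarrow> nat) \<Rightarrow> real" where
  "Sd b \<gamma> \<psi> x i = deriv (\<lambda>y. S b \<gamma> \<psi> y i) x"

definition xw :: "nat \<Rightarrow> real \<Rightarrow> nat list \<Rightarrow> real" where
  "xw b x u = (x + (\<Sum>m<length u. real (u ! m) * real b ^ m)) / real b ^ length u"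

definition tangent :: "nat \<Rightarrow> real \<Rightarrow> (real \<Rightarrow> real) \<Rightarrow> real \<Rightarrow> real \<Rightarrow> real
    \<Rightarrow> (nat \<Rightarrow> nat) \<Rightarrow> (nat \<Rightarrow> nat) \<Rightarrow> bool" where
  "tangent b \<gamma> \<psi> \<epsilon> \<delta> x0 i j \<longleftrightarrow>
     \<bar>S b \<gamma> \<psi> x0 i - S b \<gamma> \<psi> x0 j\<bar> \<le> \<epsilon> \<and> \<bar>Sd b \<gamma> \<psi> x0 i - Sd b \<gamma> \<psi> x0 j\<bar> \<le> \<delta>"

definition Etan :: "nat \<Rightarrow> real \<Rightarrow> (real \<Rightarrow> real) \<Rightarrow> nat \<Rightarrow> real \<Rightarrow> real \<Rightarrow> real
    \<Rightarrow> (nat list \<times> nat list) set" where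
  "Etan b \<gamma> \<psi> q x0 \<epsilon> \<delta> =
     {(k, l). k \<in> words b q \<and> l \<in> words b q \<and>
        (\<exists>u\<in>seqs b. \<exists>v\<in>seqs b. tangent b \<gamma> \<psi> \<epsilon> \<delta> x0 (conc k u) (conc l v))}"

definition EJ :: "nat \<Rightarrow> real \<Rightarrow> (real \<Rightarrow> real) \<Rightarrow> nat \<Rightarrow> real set
    \<Rightarrow> (nat list \<times> nat list) set" where
  "EJ b \<gamma> \<psi> q J = (\<Inter>\<epsilon>\<in>{0<..}. \<Inter>\<delta>\<in>{0<..}. \<Union>x\<in>J. Etan b \<gamma> \<psi> q x \<epsilon> \<delta>)"

definition eJ :: "nat \<Rightarrow> real \<Rightarrow> (real \<Rightarrow> real) \<Rightarrow> nat \<Rightarrow> real set \<Rightarrow> nat" where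
  "eJ b \<gamma> \<psi> q J = Max ((\<lambda>k. card {l. (k, l) \<in> EJ b \<gamma> \<psi> q J}) ` words b q)"

definition e_num :: "nat \<Rightarrow> real \<Rightarrow> (real \<Rightarrow> real) \<Rightarrow> nat \<Rightarrow> real" where
  "e_num b \<gamma> \<psi> q = lim (\<lambda>p. real (Max ((\<lambda>k. eJ b \<gamma> \<psi> q
       {real k / real b ^ p .. (real k + 1) / real b ^ p}) ` {..<b ^ p})))"

definition weight :: "(real \<Rightarrow> real) \<Rightarrow> bool" where
  "weight \<omega> \<longleftrightarrow> \<omega> \<in> borel_measurable (restrict_space lborel {0..<1}) \<and>
     (\<forall>x\<in>{0..<1}. 0 < \<omega> x) \<and>
     (\<exists>M. \<forall>x\<in>{0..<1}. \<omega> x \<le> M \<and> 1 / \<omega> x \<le> M)"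

definition admissible :: "nat \<Rightarrow> real \<Rightarrow> (real \<Rightarrow> real) \<Rightarrow> nat
    \<Rightarrow> (real \<Rightarrow> nat list \<Rightarrow> nat list \<Rightarrow> real) \<Rightarrow> bool" where
  "admissible b \<gamma> \<psi> q V \<longleftrightarrow>
     (\<forall>u\<in>words b q. \<forall>v\<in>words b q.
        (\<lambda>x. V x u v) \<in> borel_measurable (restrict_space lborel {0..<1})) \<and>
     (\<forall>x\<in>{0..<1}. \<forall>u\<in>words b q. \<forall>v\<in>words b q. 0 \<le> V x u v) \<and>
     (\<exists>\<epsilon>>0. \<exists>\<delta>>0. \<forall>x\<in>{0..<1}. \<forall>u v. (u, v) \<in> Etan b \<gamma> \<psi> q x \<epsilon> \<delta> \<longrightarrow>
        1 \<le> V x u v * V x v u)"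

definition SigmaVw :: "nat \<Rightarrow> nat \<Rightarrow> (real \<Rightarrow> nat list \<Rightarrow> nat list \<Rightarrow> real)
    \<Rightarrow> (real \<Rightarrow> real) \<Rightarrow> real \<Rightarrow> real" where
  "SigmaVw b q V \<omega> x =
     Max ((\<lambda>u. \<omega> x / \<omega> (xw b x u) * (\<Sum>v\<in>words b q. V x u v)) ` words b q)"

definition sigma :: "nat \<Rightarrow> real \<Rightarrow> (real \<Rightarrow> real) \<Rightarrow> nat \<Rightarrow> ereal" where
  "sigma b \<gamma> \<psi> q =
     (INF p \<in> {(\<omega>, V). weight \<omega> \<and> admissible b \<gamma> \<psi> q V}.
        esssup (restrict_space lborel {0..<1}) (\<lambda>x. ereal (SigmaVw b q (snd p) (fst p) x)))"

end

theory Submission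
  imports Defs
begin

lemma words_finite: "finite (words b q)"
proof -
  have "words b q \<subseteq> {xs. set xs \<subseteq> {..<b} \<and> length xs = q}"
    by (auto simp: words_def)
  moreover have "finite {xs. set xs \<subseteq> {..<b} \<and> length xs = q}"
    by (rule finite_lists_length_eq) simp
  ultimately show ?thesis by (rule finite_subset)
qed

lemma words_ne: "b > 0 \<Longrightarrow> replicate q 0 \<in> words b q"
  by (auto simp: words_def)

lemma EJ_sub: "EJ b \<gamma> \<psi> q J \<subseteq> words b q \<times> words b q"
proof
  fix t assume "t \<in> EJ b \<gamma> \<psi> q J"
  then have "t \<in> (\<Union>x\<in>J. Etan b \<gamma> \<psi> q x 1 1)" unfolding EJ_def by auto
  then show "t \<in> words b q \<times> words b q" unfolding Etan_def by auto
qed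

lemma EJ_mono: "J \<subseteq> J' \<Longrightarrow> EJ b \<gamma> \<psi> q J \<subseteq> EJ b \<gamma> \<psi> q J'"
  unfolding EJ_def by blast

lemma card_row_finite: "finite {l. (k, l) \<in> EJ b \<gamma> \<psi> q J}"
  by (rule finite_subset[OF _ words_finite[of b q]]) (use EJ_sub in blast)

lemma card_le_eJ: "k \<in> words b q \<Longrightarrow> card {l. (k, l) \<in> EJ b \<gamma> \<psi> q J} \<le> eJ b \<gamma> \<psi> q J"
  unfolding eJ_def by (rule Max_ge) (auto intro: words_finite)

lemma eJ_mono:
  assumes "J \<subseteq> J'" "b > 0"
  shows "eJ b \<gamma> \<psi> q J \<le> eJ b \<gamma> \<psi> q J'"
proof -
  have "card {l. (k, l) \<in> EJ b \<gamma> \<psi> q J} \<le> eJ b \<gamma> \<psi> q J'" if "k \<in> words b q" for k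
  proof -
    have "card {l. (k, l) \<in> EJ b \<gamma> \<psi> q J} \<le> card {l. (k, l) \<in> EJ b \<gamma> \<psi> q J'}"
      by (rule card_mono[OF card_row_finite]) (use EJ_mono[OF assms(1)] in blast)
    also have "\<dots> \<le> eJ b \<gamma> \<psi> q J'" by (rule card_le_eJ[OF that])
    finally show ?thesis .
  qed
  then show ?thesis
    unfolding eJ_def[of b \<gamma> \<psi> q J]
    using words_finite[of b q] words_ne[OF assms(2), of q]
    by (subst Max_le_iff) auto
qed

lemma Etan_sym: "(u, v) \<in> Etan b \<gamma> \<psi> q x e d \<Longrightarrow> (v, u) \<in> Etan b \<gamma> \<psi> q x e d"
  unfolding Etan_def tangent_def by (auto simp: abs_minus_commute)

lemma Etan_mono: "e \<le> e' \<Longrightarrow> d \<le> d' \<Longrightarrow> Etan b \<gamma> \<psi> q x e d \<subseteq> Etan b \<gamma> \<psi> q x e' d'"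
  unfolding Etan_def tangent_def by (fastforce intro: order_trans)

lemma interval_nest:
  fixes b k' p :: nat
  assumes "b > 0"
  shows "{real k' / real b ^ Suc p .. (real k' + 1) / real b ^ Suc p}
     \<subseteq> {real (k' div b) / real b ^ p .. (real (k' div b) + 1) / real b ^ p}"
proof -
  define k r where "k = k' div b" and "r = k' mod b"
  have k': "k' = k * b + r" and r: "r < b" using assms by (auto simp: k_def r_def)
  have bp: "real b ^ p > 0" using assms by simp
  have eq1: "real k / real b ^ p = real k * real b / real b ^ Suc p" using assms by simp
  have eq2: "(real k + 1) / real b ^ p = (real k * real b + real b) / real b ^ Suc p"
    using assms by (simp add: field_simps)
  have "real k * real b \<le> real k'" using k' by simp
  moreover have "real k' + 1 \<le> real k * real b + real b" using k' r by simp
  ultimately have "real k * real b / real b ^ Suc p \<le> real k' / real b ^ Suc p"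
    and "(real k' + 1) / real b ^ Suc p \<le> (real k * real b + real b) / real b ^ Suc p"
    using assms by (simp_all add: divide_right_mono del: power_Suc)
  then show ?thesis unfolding k_def[symmetric] eq1 eq2
    by (auto intro: order_trans)
qed

definition Ip :: "nat \<Rightarrow> nat \<Rightarrow> nat \<Rightarrow> real set" where
  "Ip b p k = {real k / real b ^ p .. (real k + 1) / real b ^ p}"

definition Fp :: "nat \<Rightarrow> real \<Rightarrow> (real \<Rightarrow> real) \<Rightarrow> nat \<Rightarrow> nat \<Rightarrow> nat" where
  "Fp b \<gamma> \<psi> q p = Max ((\<lambda>k. eJ b \<gamma> \<psi> q (Ip b p k)) ` {..<b ^ p})"

lemma Fp_dec:
  assumes "b > 0"
  shows "Fp b \<gamma> \<psi> q (Suc p) \<le> Fp b \<gamma> \<psi> q p"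
proof -
  have "eJ b \<gamma> \<psi> q (Ip b (Suc p) k') \<le> Fp b \<gamma> \<psi> q p" if "k' < b ^ Suc p" for k'
  proof -
    have "k' div b < b ^ p" using that assms
      by (simp add: div_less_iff_less_mult mult.commute)
    have "eJ b \<gamma> \<psi> q (Ip b (Suc p) k') \<le> eJ b \<gamma> \<psi> q (Ip b p (k' div b))"
      unfolding Ip_def by (rule eJ_mono[OF interval_nest[OF assms] assms])
    also have "\<dots> \<le> Fp b \<gamma> \<psi> q p" unfolding Fp_def
      using \<open>k' div b < b ^ p\<close> by (intro Max_ge) auto
    finally show ?thesis .
  qed
  then show ?thesis unfolding Fp_def[of _ _ _ _ "Suc p"]
    using assms by (subst Max_le_iff) (auto simp: lessThan_empty_iff)
qed

lemma floor_cell: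
  fixes x c :: real
  assumes "b > 0" "c = real b ^ p" "x \<in> {0..<1}"
  shows "nat \<lfloor>x * c\<rfloor> < b ^ p \<and> x \<in> Ip b p (nat \<lfloor>x * c\<rfloor>)"
proof -
  have c: "c > 0" using assms by simp
  have x: "0 \<le> x" "x < 1" using assms by auto
  have f0: "0 \<le> \<lfloor>x * c\<rfloor>" using x c by simp
  have "x * c < c" using x c by simp
  then have "\<lfloor>x * c\<rfloor> < int (b ^ p)" using assms
    by (metis floor_less_iff of_int_of_nat_eq of_nat_power)
  then have A: "nat \<lfloor>x * c\<rfloor> < b ^ p" using f0 by (simp add: nat_less_iff)
  have r: "real (nat \<lfloor>x * c\<rfloor>) = of_int \<lfloor>x * c\<rfloor>" using f0 by simp
  have "of_int \<lfloor>x * c\<rfloor> \<le> x * c" "x * c < of_int \<lfloor>x * c\<rfloor> + 1" by linarith+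
  then have "real (nat \<lfloor>x * c\<rfloor>) / c \<le> x" "x \<le> (real (nat \<lfloor>x * c\<rfloor>) + 1) / c"
    using c unfolding r by (simp_all add: pos_divide_le_eq pos_le_divide_eq)
  then show ?thesis using A unfolding Ip_def assms(2)[symmetric] by auto
qed

lemma measurable_floor_cell:
  fixes G :: "int \<Rightarrow> 'a::topological_space" and c :: real
  shows "(\<lambda>x. G \<lfloor>x * c\<rfloor>) \<in> borel_measurable (restrict_space lborel {0..<1})"
proof (rule measurable_restrict_space1)
  have "(\<lambda>x::real. \<lfloor>x * c\<rfloor>) \<in> borel \<rightarrow>\<^sub>M count_space UNIV"
    by (rule measurable_compose[OF _ measurable_real_floor]) simp
  then have "(\<lambda>x::real. \<lfloor>x * c\<rfloor>) \<in> lborel \<rightarrow>\<^sub>M count_space UNIV" by simp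
  then show "(\<lambda>x. G \<lfloor>x * c\<rfloor>) \<in> borel_measurable lborel"
    by (rule measurable_compose) simp
qed

lemma sigma_le_Fp:
  assumes b: "b > 0"
  shows "sigma b \<gamma> \<psi> q \<le> ereal (real (Fp b \<gamma> \<psi> q p))"
proof -
  define c where "c = real b ^ p"
  let ?E = "EJ b \<gamma> \<psi> q"
  define W :: "int \<Rightarrow> nat list \<Rightarrow> nat list \<Rightarrow> real" where
    "W z u v = (if (u, v) \<in> ?E (Ip b p (nat z)) then 1 else 0)" for z u v
  define V where "V x u v = W \<lfloor>x * c\<rfloor> u v" for x u v
  define T where "T = {t \<in> {..<b ^ p} \<times> words b q \<times> words b q.
      (fst (snd t), snd (snd t)) \<notin> ?E (Ip b p (fst t))}"
  have finT: "finite T" unfolding T_def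
    by (rule finite_subset[of _ "{..<b ^ p} \<times> words b q \<times> words b q"])
       (auto intro: words_finite)
  have ex: "\<forall>t\<in>T. \<exists>ed. fst ed > 0 \<and> snd ed > (0::real) \<and>
      (\<forall>x\<in>Ip b p (fst t). (fst (snd t), snd (snd t)) \<notin> Etan b \<gamma> \<psi> q x (fst ed) (snd ed))"
  proof
    fix t assume "t \<in> T"
    then have "(fst (snd t), snd (snd t)) \<notin> ?E (Ip b p (fst t))" unfolding T_def by auto
    then obtain e d where "e > 0" "d > 0"
      "\<forall>x\<in>Ip b p (fst t). (fst (snd t), snd (snd t)) \<notin> Etan b \<gamma> \<psi> q x e d"
      unfolding EJ_def by auto
    then show "\<exists>ed. fst ed > 0 \<and> snd ed > (0::real) \<and>
      (\<forall>x\<in>Ip b p (fst t). (fst (snd t), snd (snd t)) \<notin> Etan b \<gamma> \<psi> q x (fst ed) (snd ed))"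
      by (intro exI[of _ "(e, d)"]) auto
  qed
  obtain g where g: "\<And>t. t \<in> T \<Longrightarrow> fst (g t) > 0 \<and> snd (g t) > (0::real) \<and>
      (\<forall>x\<in>Ip b p (fst t). (fst (snd t), snd (snd t)) \<notin> Etan b \<gamma> \<psi> q x (fst (g t)) (snd (g t)))"
    using bchoice[OF ex] by blast
  define \<epsilon> where "\<epsilon> = Min (insert 1 ((\<lambda>t. fst (g t)) ` T))"
  define \<delta> where "\<delta> = Min (insert 1 ((\<lambda>t. snd (g t)) ` T))"
  have \<epsilon>0: "\<epsilon> > 0" unfolding \<epsilon>_def using finT g by (subst Min_gr_iff) auto
  have \<delta>0: "\<delta> > 0" unfolding \<delta>_def using finT g by (subst Min_gr_iff) auto
  have key: "(u, v) \<in> ?E (Ip b p (nat \<lfloor>x * c\<rfloor>))"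
    if x: "x \<in> {0..<1}" and uv: "(u, v) \<in> Etan b \<gamma> \<psi> q x \<epsilon> \<delta>" for x u v
  proof (rule ccontr)
    assume nE: "(u, v) \<notin> ?E (Ip b p (nat \<lfloor>x * c\<rfloor>))"
    have cell: "nat \<lfloor>x * c\<rfloor> < b ^ p" "x \<in> Ip b p (nat \<lfloor>x * c\<rfloor>)"
      using floor_cell[OF b c_def x] by auto
    have uw: "u \<in> words b q" "v \<in> words b q" using uv unfolding Etan_def by auto
    define t where "t = (nat \<lfloor>x * c\<rfloor>, u, v)"
    have tT: "t \<in> T" unfolding T_def t_def using cell uw nE by auto
    have "\<epsilon> \<le> fst (g t)" unfolding \<epsilon>_def using finT tT by (intro Min_le) auto
    moreover have "\<delta> \<le> snd (g t)" unfolding \<delta>_def using finT tT by (intro Min_le) auto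
    ultimately have "(u, v) \<in> Etan b \<gamma> \<psi> q x (fst (g t)) (snd (g t))"
      using Etan_mono uv by blast
    then show False using g[OF tT] cell unfolding t_def by auto
  qed
  have adm: "admissible b \<gamma> \<psi> q V"
    unfolding admissible_def
  proof (intro conjI ballI)
    fix u v
    show "(\<lambda>x. V x u v) \<in> borel_measurable (restrict_space lborel {0..<1})"
      unfolding V_def by (rule measurable_floor_cell)
  next
    fix x u v show "0 \<le> V x u v" unfolding V_def W_def by auto
  next
    show "\<exists>\<epsilon>>0. \<exists>\<delta>>0. \<forall>x\<in>{0..<1}. \<forall>u v. (u, v) \<in> Etan b \<gamma> \<psi> q x \<epsilon> \<delta> \<longrightarrow>
        1 \<le> V x u v * V x v u"
    proof -
      have "1 \<le> V x u v * V x v u"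
        if x: "x \<in> {0..<1}" and uv: "(u, v) \<in> Etan b \<gamma> \<psi> q x \<epsilon> \<delta>" for x u v
      proof -
        have "(u, v) \<in> ?E (Ip b p (nat \<lfloor>x * c\<rfloor>))" by (rule key[OF x uv])
        moreover have "(v, u) \<in> ?E (Ip b p (nat \<lfloor>x * c\<rfloor>))" by (rule key[OF x Etan_sym[OF uv]])
        ultimately show ?thesis unfolding V_def W_def by simp
      qed
      then show ?thesis using \<epsilon>0 \<delta>0 by blast
    qed
  qed
  have wt: "weight (\<lambda>_. 1)" unfolding weight_def by auto
  define G where "G z = Max ((\<lambda>u. (\<Sum>v\<in>words b q. W z u v)) ` words b q)" for z
  have SG: "SigmaVw b q V (\<lambda>_. 1) x = G \<lfloor>x * c\<rfloor>" for x
    unfolding SigmaVw_def G_def V_def by simp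
  have bound: "G \<lfloor>x * c\<rfloor> \<le> real (Fp b \<gamma> \<psi> q p)" if x: "x \<in> {0..<1}" for x
  proof -
    define k where "k = nat \<lfloor>x * c\<rfloor>"
    have cell: "k < b ^ p" using floor_cell[OF b c_def x] unfolding k_def by auto
    have "(\<Sum>v\<in>words b q. W \<lfloor>x * c\<rfloor> u v) \<le> real (Fp b \<gamma> \<psi> q p)"
      if u: "u \<in> words b q" for u
    proof -
      have "(\<Sum>v\<in>words b q. W \<lfloor>x * c\<rfloor> u v)
          = (\<Sum>v\<in>{v \<in> words b q. (u, v) \<in> ?E (Ip b p k)}. 1)"
        unfolding W_def k_def by (subst sum.inter_filter[OF words_finite]) (rule refl)
      also have "{v \<in> words b q. (u, v) \<in> ?E (Ip b p k)} = {l. (u, l) \<in> ?E (Ip b p k)}"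
        using EJ_sub by blast
      also have "(\<Sum>v\<in>{l. (u, l) \<in> ?E (Ip b p k)}. 1) = real (card {l. (u, l) \<in> ?E (Ip b p k)})"
        by simp
      also have "card {l. (u, l) \<in> ?E (Ip b p k)} \<le> eJ b \<gamma> \<psi> q (Ip b p k)"
        by (rule card_le_eJ[OF u])
      also have "eJ b \<gamma> \<psi> q (Ip b p k) \<le> Fp b \<gamma> \<psi> q p"
        unfolding Fp_def using cell by (intro Max_ge) auto
      finally show ?thesis by simp
    qed
    then show ?thesis unfolding G_def using words_finite[of b q] words_ne[OF b, of q]
      by (subst Max_le_iff) auto
  qed
  have "esssup (restrict_space lborel {0..<1}) (\<lambda>x. ereal (SigmaVw b q V (\<lambda>_. 1) x))
      \<le> ereal (real (Fp b \<gamma> \<psi> q p))"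
  proof (rule esssup_I)
    show "(\<lambda>x. ereal (SigmaVw b q V (\<lambda>_. 1) x)) \<in> borel_measurable (restrict_space lborel {0..<1})"
      unfolding SG by (rule measurable_floor_cell)
    show "AE x in restrict_space lborel {0..<1}. ereal (SigmaVw b q V (\<lambda>_. 1) x) \<le> ereal (real (Fp b \<gamma> \<psi> q p))"
      by (rule AE_I2) (use bound in \<open>auto simp: SG space_restrict_space\<close>)
  qed
  moreover have "sigma b \<gamma> \<psi> q \<le> esssup (restrict_space lborel {0..<1}) (\<lambda>x. ereal (SigmaVw b q V (\<lambda>_. 1) x))"
    unfolding sigma_def using adm wt by (intro INF_lower2[of "((\<lambda>_. 1), V)"]) auto
  ultimately show ?thesis by (rule order_trans[rotated])
qed

theorem lemma2p3:
  fixes b :: nat and \<gamma> :: real and \<psi> :: "real \<Rightarrow> real" and q :: nat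
  assumes "b \<ge> 2"
    and "1 / real b < \<gamma>" and "\<gamma> < 1"
    and "\<And>x. \<psi> (x + 1) = \<psi> x"
    and "\<psi> C1_differentiable_on UNIV"
    and "q \<ge> 1"
  shows "sigma b \<gamma> \<psi> q \<le> ereal (e_num b \<gamma> \<psi> q)"
proof -
  have b: "b > 0" using assms(1) by simp
  define f where "f p = real (Fp b \<gamma> \<psi> q p)" for p
  have en: "e_num b \<gamma> \<psi> q = lim f"
    unfolding e_num_def f_def Fp_def Ip_def by simp
  have "decseq f" unfolding f_def
    by (rule decseq_SucI) (simp add: Fp_dec[OF b])
  moreover have "\<forall>i. 0 \<le> f i" unfolding f_def by simp
  ultimately obtain L where L: "f \<longlonglongrightarrow> L" by (metis decseq_convergent)
  then have "lim f = L" by (rule limI)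
  have "(\<lambda>p. ereal (f p)) \<longlonglongrightarrow> ereal L" using L by simp
  moreover have "\<exists>N. \<forall>n\<ge>N. sigma b \<gamma> \<psi> q \<le> ereal (f n)"
    unfolding f_def using sigma_le_Fp[OF b] by blast
  ultimately have "sigma b \<gamma> \<psi> q \<le> ereal L" by (rule LIMSEQ_le_const)
  then show ?thesis using en \<open>lim f = L\<close> by simp
qed

end
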